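(* Let $x$ and $y$ be sequences of length $n$ such that $y=\tau(x,i)$ for some $i\in\{1,\ldots,n-1\}$. For every $j\in\{1,\ldots,n\}\setminus\{i,i+1\}$: if $\overrightarrow{PD}_x[j]\notin\{j-i-1,\,j-i\}$ then $\overrightarrow{PD}_x[j]=\overrightarrow{PD}_y[j]$; and if $\overleftarrow{PD}_x[j]\notin\{i-j,\,i+1-j\}$ then $\overleftarrow{PD}_x[j]=\overleftarrow{PD}_y[j]$.
   Context: Sequences are finite sequences of pairwise distinct integers indexed from $1$. For $1\le i\le n-1$, $\tau(x,i)$ is obtained from $x$ by exchanging $x[i]$ and $x[i+1]$. The parent-distance table of $x$ is $\overrightarrow{PD}_x[k]=k-\max\{j<k : x[j]<x[k]\}$ if such $j$ exists and $0$ otherwise; the reverse parent-distance table is $\overleftarrow{PD}_x[k]=\min\{j : k<j\le n,\ x[j]<x[k]\}-k$ if such $j$ exists and $0$ otherwise. *)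

theory Defs
  imports Main
begin

(* Sequences are lists of pairwise distinct integers, indexed from 1:
   the k-th entry (1 <= k <= length x) is  x ! (k - 1). *)

definition at :: "int list \<Rightarrow> nat \<Rightarrow> int" where
  "at x k = x ! (k - 1)"

definition tau :: "int list \<Rightarrow> nat \<Rightarrow> int list" where
  "tau x i = x[i - 1 := at x (i + 1), i := at x i]"

definition PD_fwd :: "int list \<Rightarrow> nat \<Rightarrow> int" where
  "PD_fwd x k =
     (if \<exists>j. 1 \<le> j \<and> j < k \<and> at x j < at x k
      then int k - int (Max {j. 1 \<le> j \<and> j < k \<and> at x j < at x k})
      else 0)"

definition PD_rev :: "int list \<Rightarrow> nat \<Rightarrow> int" where
  "PD_rev x k =
     (if \<exists>j. k < j \<and> j \<le> length x \<and> at x j < at x k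
      then int (Min {j. k < j \<and> j \<le> length x \<and> at x j < at x k}) - int k
      else 0)"

end

theory Submission
  imports Defs
begin

lemma swapset_max:
  fixes A B :: "nat set" and i :: nat
  assumes fA: "finite A" and fB: "finite B"
    and mem: "\<And>k. k \<in> B \<longleftrightarrow> (if k = i then i+1 \<in> A else if k = i+1 then i \<in> A else k \<in> A)"
    and ne: "A \<noteq> {}" and nm: "Max A \<noteq> i" "Max A \<noteq> i+1"
  shows "Max B = Max A"
proof (rule Max_eqI[OF fB])
  show "Max A \<in> B" using mem[of "Max A"] nm Max_in[OF fA ne] by simp
  fix k assume k: "k \<in> B"
  show "k \<le> Max A"
  proof (cases "k = i \<or> k = i+1")
    case True
    then have "i \<in> A \<or> i+1 \<in> A" using mem[of k] k by (auto split: if_splits)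
    then have "i \<le> Max A" using Max_ge[OF fA] by fastforce
    then show ?thesis using True nm by auto
  next
    case False then show ?thesis using mem[of k] k Max_ge[OF fA] by auto
  qed
qed

lemma swapset_min:
  fixes A B :: "nat set" and i :: nat
  assumes fA: "finite A" and fB: "finite B"
    and mem: "\<And>k. k \<in> B \<longleftrightarrow> (if k = i then i+1 \<in> A else if k = i+1 then i \<in> A else k \<in> A)"
    and ne: "A \<noteq> {}" and nm: "Min A \<noteq> i" "Min A \<noteq> i+1"
  shows "Min B = Min A"
proof (rule Min_eqI[OF fB])
  show "Min A \<in> B" using mem[of "Min A"] nm Min_in[OF fA ne] by simp
  fix k assume k: "k \<in> B"
  show "Min A \<le> k"
  proof (cases "k = i \<or> k = i+1")
    case True
    then have "i \<in> A \<or> i+1 \<in> A" using mem[of k] k by (auto split: if_splits)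
    then have "Min A \<le> i+1" using Min_le[OF fA] by fastforce
    then show ?thesis using True nm by auto
  next
    case False then show ?thesis using mem[of k] k Min_le[OF fA] by auto
  qed
qed

theorem lemma12:
  fixes x y :: "int list" and n i :: nat
  assumes "length x = n" and "length y = n"
    and "distinct x" and "distinct y"
    and "1 \<le> i" and "i \<le> n - 1"
    and "y = tau x i"
  shows "\<forall>j. 1 \<le> j \<and> j \<le> n \<and> j \<noteq> i \<and> j \<noteq> i + 1 \<longrightarrow>
           (PD_fwd x j \<notin> {int j - int i - 1, int j - int i} \<longrightarrow> PD_fwd x j = PD_fwd y j) \<and>
           (PD_rev x j \<notin> {int i - int j, int i + 1 - int j} \<longrightarrow> PD_rev x j = PD_rev y j)"
proof (intro allI impI conjI)
  have n: "i + 1 \<le> n" using assms by simp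
  have yo: "at y k = at x k" if "1 \<le> k" "k \<noteq> i" "k \<noteq> i+1" for k
    using that n assms unfolding tau_def at_def by (cases k) auto
  have yi: "at y i = at x (i+1)" and yi1: "at y (i+1) = at x i"
    using n assms unfolding tau_def at_def by (auto simp: nth_list_update)
  fix j assume j: "1 \<le> j \<and> j \<le> n \<and> j \<noteq> i \<and> j \<noteq> i + 1"
  have yj: "at y j = at x j" using yo j by auto
  {
    assume h: "PD_fwd x j \<notin> {int j - int i - 1, int j - int i}"
    define A where "A = {k. 1 \<le> k \<and> k < j \<and> at x k < at x j}"
    define B where "B = {k. 1 \<le> k \<and> k < j \<and> at y k < at y j}"
    have fA: "finite A" and fB: "finite B" unfolding A_def B_def by auto
    have ex: "(\<exists>k. 1 \<le> k \<and> k < j \<and> at x k < at x j) \<longleftrightarrow> A \<noteq> {}"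
      "(\<exists>k. 1 \<le> k \<and> k < j \<and> at y k < at y j) \<longleftrightarrow> B \<noteq> {}"
      unfolding A_def B_def by auto
    show "PD_fwd x j = PD_fwd y j"
    proof (cases "j < i")
      case True
      have "A = B" unfolding A_def B_def using yo yj True by fastforce
      then show ?thesis unfolding PD_fwd_def ex A_def[symmetric] B_def[symmetric] by simp
    next
      case False
      then have ji: "j > i + 1" using j by auto
      have mem: "\<And>k. k \<in> B \<longleftrightarrow> (if k = i then i+1 \<in> A else if k = i+1 then i \<in> A else k \<in> A)"
        unfolding A_def B_def using yo yj yi yi1 ji assms(5) by auto
      show ?thesis
      proof (cases "A = {}")
        case True
        then have "B = {}" using mem by (auto split: if_splits)
        then show ?thesis using True unfolding PD_fwd_def ex by simp
      next
        case False
        then have "B \<noteq> {}" using mem[of "Max A"] Max_in[OF fA False] mem[of i] mem[of "i+1"]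
          by (auto split: if_splits)
        moreover have "PD_fwd x j = int j - int (Max A)" unfolding PD_fwd_def ex using False A_def by simp
        moreover have "PD_fwd y j = int j - int (Max B)" unfolding PD_fwd_def ex using \<open>B \<noteq> {}\<close> B_def by simp
        moreover have "Max A \<noteq> i" "Max A \<noteq> i+1" using h calculation(2) by auto
        ultimately show ?thesis using swapset_max[OF fA fB mem False] by simp
      qed
    qed
  }
  {
    assume h: "PD_rev x j \<notin> {int i - int j, int i + 1 - int j}"
    define A where "A = {k. j < k \<and> k \<le> length x \<and> at x k < at x j}"
    define B where "B = {k. j < k \<and> k \<le> length y \<and> at y k < at y j}"
    have fA: "finite A" and fB: "finite B" unfolding A_def B_def by auto
    have ex: "(\<exists>k. j < k \<and> k \<le> length x \<and> at x k < at x j) \<longleftrightarrow> A \<noteq> {}"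
      "(\<exists>k. j < k \<and> k \<le> length y \<and> at y k < at y j) \<longleftrightarrow> B \<noteq> {}"
      unfolding A_def B_def by auto
    show "PD_rev x j = PD_rev y j"
    proof (cases "j > i")
      case True
      then have ji: "j > i + 1" using j by auto
      have "A = B" unfolding A_def B_def using yo yj ji assms(1,2) by fastforce
      then show ?thesis unfolding PD_rev_def ex A_def[symmetric] B_def[symmetric] by simp
    next
      case False
      then have ji: "j < i" using j by auto
      have mem: "\<And>k. k \<in> B \<longleftrightarrow> (if k = i then i+1 \<in> A else if k = i+1 then i \<in> A else k \<in> A)"
        unfolding A_def B_def using yo yj yi yi1 ji n assms(1,2) j by auto
      show ?thesis
      proof (cases "A = {}")
        case True
        then have "B = {}" using mem by (auto split: if_splits)
        then show ?thesis using True unfolding PD_rev_def ex by simp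
      next
        case False
        then have "B \<noteq> {}" using mem[of "Min A"] Min_in[OF fA False] mem[of i] mem[of "i+1"]
          by (auto split: if_splits)
        moreover have "PD_rev x j = int (Min A) - int j" unfolding PD_rev_def ex using False A_def by simp
        moreover have "PD_rev y j = int (Min B) - int j" unfolding PD_rev_def ex using \<open>B \<noteq> {}\<close> B_def by simp
        moreover have "Min A \<noteq> i" "Min A \<noteq> i+1" using h calculation(2) by auto
        ultimately show ?thesis using swapset_min[OF fA fB mem False] by simp
      qed
    qed
  }
qed

end
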